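(* Let $U=B(c,R)\cap\mathbb{Z}[\mathrm{i}]$ for some $c\in\mathbb{C}$, $R>0$, let $p,q\in\mathbb{Z}[\mathrm{i}]$ be $\mathbb{Z}$-linearly independent, and suppose the configuration $(a_z)_{z\in\mathbb{Z}[\mathrm{i}]}$ has step-period $(p,q)$ in $U$. Then $(a_z)$ has period $(p,q)$ in $U^{\circ r}$, where $r=|p|+|q|$.
   Context: For $\mathbb{Z}$-linearly independent $p_1,p_2\in\mathbb{Z}[\mathrm{i}]$, $\langle p_1,p_2\rangle=\{m_1p_1+m_2p_2:m_i\in\mathbb{Z}\}$. For $U\subseteq\mathbb{Z}[\mathrm{i}]$: $(a_z)$ has period $(p_1,p_2)$ in $U$ if for all $z_1,z_2\in U$ with $z_1-z_2\in\langle p_1,p_2\rangle$ we have $a_{z_1}=a_{z_2}$; $(a_z)$ has step-period $(p_1,p_2)$ in $U$ if whenever $z\in U$ and $z+p_i\in U$ for some $i\in\{1,2\}$, then $a_z=a_{z+p_i}$. For $V\subseteq\mathbb{Z}[\mathrm{i}]$ and $r>0$, $V^{\circ r}=\{z\in V:B(z,r)\cap\mathbb{Z}[\mathrm{i}]\subseteq V\}$, where $B(z,r)$ is the ball of centre $z$ and radius $r$ in $\mathbb{C}$. *)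

theory Defs
  imports "HOL-Analysis.Analysis"
begin

definition gauss_ints :: "complex set" where
  "gauss_ints = {z. Re z \<in> \<int> \<and> Im z \<in> \<int>}"

definition Z_lin_indep :: "complex \<Rightarrow> complex \<Rightarrow> bool" where
  "Z_lin_indep p1 p2 \<longleftrightarrow>
     (\<forall>m1 m2 :: int. of_int m1 * p1 + of_int m2 * p2 = 0 \<longrightarrow> m1 = 0 \<and> m2 = 0)"

definition lattice :: "complex \<Rightarrow> complex \<Rightarrow> complex set" where
  "lattice p1 p2 = {of_int m1 * p1 + of_int m2 * p2 | m1 m2 :: int. True}"

definition has_period :: "(complex \<Rightarrow> 'a) \<Rightarrow> complex \<Rightarrow> complex \<Rightarrow> complex set \<Rightarrow> bool" where
  "has_period a p1 p2 U \<longleftrightarrow>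
     (\<forall>z1\<in>U. \<forall>z2\<in>U. z1 - z2 \<in> lattice p1 p2 \<longrightarrow> a z1 = a z2)"

definition has_step_period :: "(complex \<Rightarrow> 'a) \<Rightarrow> complex \<Rightarrow> complex \<Rightarrow> complex set \<Rightarrow> bool" where
  "has_step_period a p1 p2 U \<longleftrightarrow>
     (\<forall>z\<in>U. \<forall>w\<in>{p1, p2}. z + w \<in> U \<longrightarrow> a z = a (z + w))"

definition inner_part :: "complex set \<Rightarrow> real \<Rightarrow> complex set" where
  "inner_part V r = {z \<in> V. ball z r \<inter> gauss_ints \<subseteq> V}"

end

theory Submission imports Defs begin

lemma gauss_add: "x \<in> gauss_ints \<Longrightarrow> y \<in> gauss_ints \<Longrightarrow> x + y \<in> gauss_ints"
  by (auto simp: gauss_ints_def)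

lemma gauss_sign: "x \<in> gauss_ints \<Longrightarrow> e \<in> {-1,1::real} \<Longrightarrow> complex_of_real e * x \<in> gauss_ints"
  by (auto simp: gauss_ints_def)

lemma gauss_nat: "x \<in> gauss_ints \<Longrightarrow> of_nat k * x \<in> gauss_ints"
  by (auto simp: gauss_ints_def)

lemma strict_tri:
  fixes u v :: complex
  assumes "Re u * Im v - Im u * Re v \<noteq> 0"
  shows "norm (u+v) < norm u + norm v"
proof -
  have "(norm u * norm v)\<^sup>2 = ((Re u)\<^sup>2 + (Im u)\<^sup>2) * ((Re v)\<^sup>2 + (Im v)\<^sup>2)"
    by (simp add: power_mult_distrib cmod_power2)
  also have "\<dots> = (Re u * Re v + Im u * Im v)\<^sup>2 + (Re u * Im v - Im u * Re v)\<^sup>2"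
    by (simp add: power2_eq_square algebra_simps)
  finally have "\<bar>Re u * Re v + Im u * Im v\<bar>\<^sup>2 < (norm u * norm v)\<^sup>2"
    using assms by simp
  hence h: "Re u * Re v + Im u * Im v < norm u * norm v"
    using power2_less_imp_less by fastforce
  have "(norm (u+v))\<^sup>2 = (Re u)\<^sup>2 + (Im u)\<^sup>2 + (Re v)\<^sup>2 + (Im v)\<^sup>2 + 2 * (Re u * Re v + Im u * Im v)"
    unfolding cmod_power2 by (simp add: power2_eq_square algebra_simps)
  also have "\<dots> < (norm u + norm v)\<^sup>2"
    using h by (simp add: power2_sum cmod_power2)
  finally show ?thesis using power2_less_imp_less by fastforce
qed

lemma indep_det:
  assumes "p \<in> gauss_ints" "q \<in> gauss_ints" "Z_lin_indep p q"
  shows "Re p * Im q - Im p * Re q \<noteq> 0"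
proof
  assume h: "Re p * Im q - Im p * Re q = 0"
  obtain a b c d :: int where ab: "Re p = of_int a" "Im p = of_int b" "Re q = of_int c" "Im q = of_int d"
    using assms(1,2) unfolding gauss_ints_def by (auto elim!: Ints_cases)
  have "real_of_int (a * d - b * c) = 0" using h unfolding ab by simp
  hence "a * d - b * c = 0" by (simp only: of_int_eq_0_iff)
  hence det: "a * d = b * c" by simp
  have I: "\<And>m1 m2. of_int m1 * p + of_int m2 * q = 0 \<Longrightarrow> m1 = 0 \<and> m2 = 0"
    using assms(3) unfolding Z_lin_indep_def by blast
  have comb: "of_int x * p + of_int y * q = 0"
    if "x * a + y * c = 0" "x * b + y * d = 0" for x y :: int
  proof (rule complex_eqI)
    have "real_of_int (x * a + y * c) = 0" using that(1) by simp
    thus "Re (of_int x * p + of_int y * q) = Re 0" by (simp add: ab)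
    have "real_of_int (x * b + y * d) = 0" using that(2) by simp
    thus "Im (of_int x * p + of_int y * q) = Im 0" by (simp add: ab)
  qed
  show False
  proof (cases "c \<noteq> 0 \<or> a \<noteq> 0")
    case True
    have "c * a + (-a) * c = 0" "c * b + (-a) * d = 0" using det by (simp_all add: algebra_simps)
    from I[OF comb[OF this]] True show False by simp
  next
    case F: False
    show False
    proof (cases "d \<noteq> 0 \<or> b \<noteq> 0")
      case True
      have "d * a + (-b) * c = 0" "d * b + (-b) * d = 0" using F by (simp_all add: algebra_simps)
      from I[OF comb[OF this]] True show False by simp
    next
      case False
      have "1 * a + 0 * c = 0" "1 * b + 0 * d = 0" using F False by simp_all
      from I[OF comb[OF this]] show False by simp
    qed
  qed
qed

lemma walk:
  fixes a :: "complex \<Rightarrow> 'a" and z0 P Q :: complex and m n :: nat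
  assumes step: "\<And>z w. z \<in> U \<Longrightarrow> w \<in> {P,Q} \<Longrightarrow> z + w \<in> U \<Longrightarrow> a z = a (z + w)"
  and good: "\<And>i j. i \<le> m \<Longrightarrow> j \<le> n \<Longrightarrow> - int m \<le> int i * int n - int j * int m \<Longrightarrow>
      int i * int n - int j * int m \<le> int n \<Longrightarrow> z0 + of_nat i * P + of_nat j * Q \<in> U"
  shows "k = (m - i) + (n - j) \<Longrightarrow> i \<le> m \<Longrightarrow> j \<le> n \<Longrightarrow> - int m \<le> int i * int n - int j * int m \<Longrightarrow>
      int i * int n - int j * int m \<le> int n \<Longrightarrow> a (z0 + of_nat i * P + of_nat j * Q) = a (z0 + of_nat m * P + of_nat n * Q)"
proof (induction k arbitrary: i j)
  case 0
  then show ?case by (metis add_is_0 diff_is_0_eq le_antisym)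
next
  case (Suc k)
  show ?case
  proof (cases "int i * int n - int j * int m \<le> 0 \<and> i < m")
    case True
    hence "i < m" by simp
    have IH: "a (z0 + of_nat (Suc i) * P + of_nat j * Q) = a (z0 + of_nat m * P + of_nat n * Q)"
      using Suc.prems True \<open>i < m\<close> by (intro Suc.IH) (auto simp: algebra_simps)
    have E: "z0 + of_nat (Suc i) * P + of_nat j * Q = (z0 + of_nat i * P + of_nat j * Q) + P"
      by (simp add: algebra_simps)
    have A1: "z0 + of_nat i * P + of_nat j * Q \<in> U" using Suc.prems by (intro good) auto
    have A2: "(z0 + of_nat i * P + of_nat j * Q) + P \<in> U"
      unfolding E[symmetric] using Suc.prems True \<open>i < m\<close> by (intro good) (auto simp: algebra_simps)
    have "a (z0 + of_nat i * P + of_nat j * Q) = a ((z0 + of_nat i * P + of_nat j * Q) + P)"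
      by (rule step[OF A1 _ A2]) simp
    then show ?thesis using IH[unfolded E] by simp
  next
    case False
    have "j < n"
    proof (rule ccontr)
      assume "\<not> j < n"
      hence jn: "j = n" using Suc by simp
      have "int n * (int i - int m) \<le> 0" using Suc.prems by (simp add: mult_nonneg_nonpos)
      hence "int i * int n - int j * int m \<le> 0" using jn by (simp add: algebra_simps)
      hence "i = m" using False Suc.prems by simp
      thus False using jn Suc.prems by simp
    qed
    have jm: "int j * int m \<le> int n * int m" using \<open>j < n\<close> by (intro mult_right_mono) simp_all
    have IH: "a (z0 + of_nat i * P + of_nat (Suc j) * Q) = a (z0 + of_nat m * P + of_nat n * Q)"
      using Suc.prems False \<open>j < n\<close> jm by (intro Suc.IH) (auto simp: algebra_simps)
    have E: "z0 + of_nat i * P + of_nat (Suc j) * Q = (z0 + of_nat i * P + of_nat j * Q) + Q"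
      by (simp add: algebra_simps)
    have A1: "z0 + of_nat i * P + of_nat j * Q \<in> U" using Suc.prems by (intro good) auto
    have A2: "(z0 + of_nat i * P + of_nat j * Q) + Q \<in> U"
      unfolding E[symmetric] using Suc.prems False \<open>j < n\<close> jm by (intro good) (auto simp: algebra_simps)
    have "a (z0 + of_nat i * P + of_nat j * Q) = a ((z0 + of_nat i * P + of_nat j * Q) + Q)"
      by (rule step[OF A1 _ A2]) simp
    then show ?thesis using IH[unfolded E] by simp
  qed
qed

lemma scale1:
  fixes X D M :: real
  assumes "M > 0" "M * X = D" "\<bar>D\<bar> \<le> M"
  shows "\<bar>X\<bar> \<le> 1"
proof -
  have "\<bar>M * X\<bar> = M * \<bar>X\<bar>" using assms(1) by (simp add: abs_mult)
  hence "M * \<bar>X\<bar> \<le> M * 1" using assms by simp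
  thus ?thesis using assms(1) by (simp only: mult_le_cancel_left_pos)
qed

lemma tube:
  fixes i j m n :: nat
  assumes "i \<le> m" "j \<le> n" "- int m \<le> int i * int n - int j * int m" "int i * int n - int j * int m \<le> int n"
  shows "\<exists>l::real. 0 \<le> l \<and> l \<le> 1 \<and> \<bar>real i - l * real m\<bar> \<le> 1 \<and> \<bar>real j - l * real n\<bar> \<le> 1"
proof -
  have e: "real_of_int (int i * int n - int j * int m) = real i * real n - real j * real m" by simp
  have "real_of_int (- int m) \<le> real_of_int (int i * int n - int j * int m)"
    using assms(3) by (simp only: of_int_le_iff)
  hence D1: "- real m \<le> real i * real n - real j * real m" by (simp only: e of_int_minus of_int_of_nat_eq)
  have "real_of_int (int i * int n - int j * int m) \<le> real_of_int (int n)"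
    using assms(4) by (simp only: of_int_le_iff)
  hence D2: "real i * real n - real j * real m \<le> real n" by (simp only: e of_int_minus of_int_of_nat_eq)
  have im: "real i \<le> real m" and jn: "real j \<le> real n" using assms(1,2) by simp_all
  show ?thesis
  proof (cases "n \<le> m")
    case True
    hence nm: "real n \<le> real m" by simp
    show ?thesis
    proof (cases "m = 0")
      case True then show ?thesis using assms nm by (intro exI[of _ 0]) simp
    next
      case False
      hence mp: "real m > 0" by simp
      have mi: "real m * (real i / real m) = real i" using mp by simp
      have "real m * (real j - real i / real m * real n) = - (real i * real n - real j * real m)"
        by (simp only: right_diff_distrib mult.assoc[symmetric] mi) (simp add: algebra_simps)
      moreover have "\<bar>- (real i * real n - real j * real m)\<bar> \<le> real m"
        using D1 D2 nm by (intro abs_leI) linarith+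
      ultimately have "\<bar>real j - real i / real m * real n\<bar> \<le> 1" using mp by (rule scale1[rotated])
      moreover have "real i - real i / real m * real m = 0" using mp by simp
      moreover have "0 \<le> real i / real m" by simp
      moreover have "real i / real m \<le> 1" using mp im by simp
      ultimately show ?thesis by (intro exI[of _ "real i / real m"]) simp
    qed
  next
    case False
    hence np: "real n > 0" and mn: "real m \<le> real n" by simp_all
    have nj: "real n * (real j / real n) = real j" using np by simp
    have "real n * (real i - real j / real n * real m) = real i * real n - real j * real m"
      by (simp only: right_diff_distrib mult.assoc[symmetric] nj) (simp add: algebra_simps)
    moreover have "\<bar>real i * real n - real j * real m\<bar> \<le> real n"
      using D1 D2 mn by (intro abs_leI) linarith+
    ultimately have "\<bar>real i - real j / real n * real m\<bar> \<le> 1" using np by (rule scale1[rotated])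
    moreover have "real j - real j / real n * real n = 0" using np by simp
    moreover have "0 \<le> real j / real n" by simp
    moreover have "real j / real n \<le> 1" using np jn by simp
    ultimately show ?thesis by (intro exI[of _ "real j / real n"]) simp
  qed
qed

lemma seg:
  fixes B :: "complex set"
  assumes "convex B" "u + v \<in> B" "u - v \<in> B" "\<bar>x\<bar> \<le> 1"
  shows "u + complex_of_real x * v \<in> B"
proof -
  have "((1+x)/2) *\<^sub>R (u+v) + ((1-x)/2) *\<^sub>R (u-v) \<in> B"
    using assms by (intro convexD) (auto simp: field_simps)
  moreover have "((1+x)/2) *\<^sub>R (u+v) + ((1-x)/2) *\<^sub>R (u-v) = u + complex_of_real x * v"
    by (simp add: scaleR_conv_of_real field_simps)
  ultimately show ?thesis by simp
qed

lemma corners: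
  fixes B :: "complex set"
  assumes "convex B" "\<And>e1 e2. e1 \<in> {-1,1} \<Longrightarrow> e2 \<in> {-1,1} \<Longrightarrow>
     z + complex_of_real e1 * P + complex_of_real e2 * Q \<in> B"
    "\<bar>x\<bar> \<le> 1" "\<bar>y\<bar> \<le> 1"
  shows "z + complex_of_real x * P + complex_of_real y * Q \<in> B"
proof -
  have "\<And>e2. e2 \<in> {-1,1} \<Longrightarrow> (z + complex_of_real e2 * Q) + complex_of_real x * P \<in> B"
  proof -
    fix e2 :: real assume e: "e2 \<in> {-1,1}"
    show "(z + complex_of_real e2 * Q) + complex_of_real x * P \<in> B"
      using assms(2)[of 1 e2] assms(2)[of "-1" e2] e
      by (intro seg[OF assms(1) _ _ assms(3)]) (auto simp: algebra_simps)
  qed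
  from this[of 1] this[of "-1"]
  have "(z + complex_of_real x * P) + complex_of_real y * Q \<in> B"
    by (intro seg[OF assms(1) _ _ assms(4)]) (auto simp: algebra_simps)
  thus ?thesis by simp
qed


lemma inner_corner:
  assumes U: "U = ball c R \<inter> gauss_ints" and p: "p \<in> gauss_ints" and q: "q \<in> gauss_ints"
    and det: "Re p * Im q - Im p * Re q \<noteq> 0"
    and z: "z \<in> inner_part U (norm p + norm q)" and e: "e1 \<in> {-1,1}" "e2 \<in> {-1,1::real}"
  shows "z + complex_of_real e1 * p + complex_of_real e2 * q \<in> U"
proof -
  have zU: "z \<in> U" and sub: "ball z (norm p + norm q) \<inter> gauss_ints \<subseteq> U"
    using z by (auto simp: inner_part_def)
  have "z + complex_of_real e1 * p + complex_of_real e2 * q \<in> gauss_ints"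
    using zU U p q e by (intro gauss_add gauss_sign) auto
  moreover have "norm (complex_of_real e1 * p + complex_of_real e2 * q) < norm p + norm q"
  proof -
    have "Re (complex_of_real e1 * p) * Im (complex_of_real e2 * q) - Im (complex_of_real e1 * p) * Re (complex_of_real e2 * q)
        = e1 * e2 * (Re p * Im q - Im p * Re q)" by (simp add: algebra_simps)
    also have "\<dots> \<noteq> 0" using e det by auto
    finally have "norm (complex_of_real e1 * p + complex_of_real e2 * q) < norm (complex_of_real e1 * p) + norm (complex_of_real e2 * q)"
      by (rule strict_tri)
    thus ?thesis using e by (auto simp: norm_mult)
  qed
  moreover have "dist z (z + complex_of_real e1 * p + complex_of_real e2 * q) = norm (complex_of_real e1 * p + complex_of_real e2 * q)"
    by (simp add: dist_norm norm_minus_commute add.assoc add.commute)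
  ultimately show ?thesis using sub by (auto simp: mem_ball)
qed

theorem lemma4p4:
  fixes a :: "complex \<Rightarrow> 'a" and c p q :: complex and R :: real and U :: "complex set"
  assumes "U = ball c R \<inter> gauss_ints"
    and "R > 0"
    and "p \<in> gauss_ints" and "q \<in> gauss_ints"
    and "Z_lin_indep p q"
    and "has_step_period a p q U"
  shows "has_period a p q (inner_part U (norm p + norm q))"
  unfolding has_period_def
proof (intro ballI impI)
  fix z1 z2 assume z1: "z1 \<in> inner_part U (norm p + norm q)" and z2: "z2 \<in> inner_part U (norm p + norm q)"
    and "z1 - z2 \<in> lattice p q"
  then obtain m1 m2 :: int where mm: "z1 - z2 = of_int m1 * p + of_int m2 * q"
    unfolding lattice_def by auto
  have det: "Re p * Im q - Im p * Re q \<noteq> 0" using indep_det assms(3-5) .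
  have z1U: "z1 \<in> U" and z2U: "z2 \<in> U" using z1 z2 by (auto simp: inner_part_def)
  define sP :: real where "sP = (if m1 \<ge> 0 then 1 else -1)"
  define sQ :: real where "sQ = (if m2 \<ge> 0 then 1 else -1)"
  define P where "P = complex_of_real sP * p"
  define Q where "Q = complex_of_real sQ * q"
  define m where "m = nat \<bar>m1\<bar>"
  define n where "n = nat \<bar>m2\<bar>"
  have sP: "sP \<in> {-1,1}" and sQ: "sQ \<in> {-1,1}" by (auto simp: sP_def sQ_def)
  have "of_int m1 * p = of_nat m * P" by (simp add: m_def P_def sP_def)
  moreover have "of_int m2 * q = of_nat n * Q" by (simp add: n_def Q_def sQ_def)
  ultimately have z1eq: "z1 = z2 + of_nat m * P + of_nat n * Q" using mm by (simp add: algebra_simps)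
  have Pg: "P \<in> gauss_ints" and Qg: "Q \<in> gauss_ints"
    using assms(3,4) sP sQ by (auto simp: P_def Q_def intro!: gauss_sign)
  have sp: "\<And>z w. z \<in> U \<Longrightarrow> w \<in> {p, q} \<Longrightarrow> z + w \<in> U \<Longrightarrow> a z = a (z + w)"
    using assms(6) unfolding has_step_period_def by blast
  have step: "\<And>z w. z \<in> U \<Longrightarrow> w \<in> {P,Q} \<Longrightarrow> z + w \<in> U \<Longrightarrow> a z = a (z + w)"
  proof -
    fix z w assume zU: "z \<in> U" and w: "w \<in> {P,Q}" and zw: "z + w \<in> U"
    show "a z = a (z + w)"
    proof (cases "w \<in> {p,q}")
      case True then show ?thesis using sp zU zw by blast
    next
      case False
      hence "w = - p \<or> w = - q" using w sP sQ by (auto simp: P_def Q_def)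
      hence "- w \<in> {p,q}" by auto
      hence "a (z + w) = a (z + w + - w)" using sp[of "z + w" "- w"] zU zw by simp
      thus ?thesis by simp
    qed
  qed
  have corner: "\<And>z e1 e2. z \<in> {z1, z2} \<Longrightarrow> e1 \<in> {-1,1} \<Longrightarrow> e2 \<in> {-1,1} \<Longrightarrow>
      z + complex_of_real e1 * P + complex_of_real e2 * Q \<in> ball c R"
  proof -
    fix z e1 e2 assume z: "z \<in> {z1, z2}" and e: "e1 \<in> {-1,1::real}" "e2 \<in> {-1,1::real}"
    have "z + complex_of_real (e1 * sP) * p + complex_of_real (e2 * sQ) * q \<in> U"
      using z z1 z2 e sP sQ by (intro inner_corner[OF assms(1,3,4) det]) auto
    thus "z + complex_of_real e1 * P + complex_of_real e2 * Q \<in> ball c R"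
      using assms(1) by (simp add: P_def Q_def mult.assoc)
  qed
  have good: "\<And>i j. i \<le> m \<Longrightarrow> j \<le> n \<Longrightarrow> - int m \<le> int i * int n - int j * int m \<Longrightarrow>
      int i * int n - int j * int m \<le> int n \<Longrightarrow> z2 + of_nat i * P + of_nat j * Q \<in> U"
  proof -
    fix i j assume h: "i \<le> m" "j \<le> n" "- int m \<le> int i * int n - int j * int m"
      "int i * int n - int j * int m \<le> int n"
    obtain l :: real where l: "0 \<le> l" "l \<le> 1" "\<bar>real i - l * real m\<bar> \<le> 1" "\<bar>real j - l * real n\<bar> \<le> 1"
      using tube[OF h] by blast
    have cz1: "\<And>e1 e2. e1 \<in> {-1,1} \<Longrightarrow> e2 \<in> {-1,1} \<Longrightarrow> z1 + complex_of_real e1 * P + complex_of_real e2 * Q \<in> ball c R"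
      by (rule corner) simp_all
    have cz2: "\<And>e1 e2. e1 \<in> {-1,1} \<Longrightarrow> e2 \<in> {-1,1} \<Longrightarrow> z2 + complex_of_real e1 * P + complex_of_real e2 * Q \<in> ball c R"
      by (rule corner) simp_all
    define x where "x = real i - l * real m"
    define y where "y = real j - l * real n"
    have c1: "z2 + complex_of_real x * P + complex_of_real y * Q \<in> ball c R"
      by (rule corners[OF convex_ball cz2]) (use l(3,4) in \<open>simp_all only: x_def y_def\<close>)
    have c2: "z1 + complex_of_real x * P + complex_of_real y * Q \<in> ball c R"
      by (rule corners[OF convex_ball cz1]) (use l(3,4) in \<open>simp_all only: x_def y_def\<close>)
    have "(1 - l) *\<^sub>R (z2 + complex_of_real x * P + complex_of_real y * Q) + l *\<^sub>R (z1 + complex_of_real x * P + complex_of_real y * Q) \<in> ball c R"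
      using c1 c2 l by (intro convexD[OF convex_ball]) auto
    moreover have "(1 - l) *\<^sub>R (z2 + complex_of_real x * P + complex_of_real y * Q) + l *\<^sub>R (z1 + complex_of_real x * P + complex_of_real y * Q)
        = z2 + of_nat i * P + of_nat j * Q"
      unfolding z1eq x_def y_def scaleR_conv_of_real by (simp add: algebra_simps)
    ultimately have "z2 + of_nat i * P + of_nat j * Q \<in> ball c R" by simp
    moreover have "z2 + of_nat i * P + of_nat j * Q \<in> gauss_ints"
      using z2U assms(1) Pg Qg by (intro gauss_add gauss_nat) auto
    ultimately show "z2 + of_nat i * P + of_nat j * Q \<in> U" using assms(1) by simp
  qed
  have "a (z2 + of_nat 0 * P + of_nat 0 * Q) = a (z2 + of_nat m * P + of_nat n * Q)"
    by (rule walk[of U P Q a m n z2 "m + n"], rule step, assumption+, rule good, auto)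
  thus "a z1 = a z2" using z1eq by simp
qed

end
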